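(* Let $m\in\mathbb{N}$, $r\in\{1,\dots,m\}$, and let $v$ be a vertex of $D_m$ of generation number $r$. Then the set $\{x\in V(D_m): d_{D_m}(x,v)\le 2^{r-1}\}$ is contained in a subdiamond of $D_m$ of height $2^r$.
   Context: Diamonds: $D_0$ is an edge; $D_i$ is obtained from $D_{i-1}$ by replacing each edge $uv$ by a quadrilateral $u,a,v,b$; $D_m$ has the shortest path metric with unit edges. Generation number $r$ ($1\le r\le m$) consists of the vertices of $D_{m-r+1}$ not belonging to $D_{m-r}$ (so generation $1$ are the vertices added in the last step; the two vertices of $D_0$ belong to no generation). A subdiamond of $D_m$ is the set of vertices that evolved from a single edge $e$ of some $D_j$, $0\le j\le m$, including the endpoints of $e$ (its top and bottom); its height is the distance between top and bottom, $2^{m-j}$. *)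

theory Defs
  imports Main
begin

text \<open>New w s is one of the two new vertices (a for s = False, b for s = True) created
  when the edge labelled w (an edge of D_j with j = length w) is replaced by a quadrilateral.\<close>
datatype dvert = Top | Bot | New "nat list" bool

fun dedges :: "nat \<Rightarrow> (nat list \<times> dvert \<times> dvert) set" where
  "dedges 0 = {([], Bot, Top)}"
| "dedges (Suc j) = (\<Union>(w, u, v) \<in> dedges j.
     {(w @ [0], u, New w False), (w @ [1], New w False, v),
      (w @ [2], u, New w True), (w @ [3], New w True, v)})"

definition dverts :: "nat \<Rightarrow> dvert set" where
  "dverts j = {x. \<exists>w u v. (w, u, v) \<in> dedges j \<and> (x = u \<or> x = v)}"

definition dadj :: "nat \<Rightarrow> dvert \<Rightarrow> dvert \<Rightarrow> bool" where
  "dadj m x y \<longleftrightarrow> (\<exists>w. (w, x, y) \<in> dedges m \<or> (w, y, x) \<in> dedges m)"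

definition dwalk :: "nat \<Rightarrow> dvert list \<Rightarrow> bool" where
  "dwalk m p \<longleftrightarrow> p \<noteq> [] \<and> set p \<subseteq> dverts m \<and>
     (\<forall>i. Suc i < length p \<longrightarrow> dadj m (p ! i) (p ! Suc i))"

definition ddist :: "nat \<Rightarrow> dvert \<Rightarrow> dvert \<Rightarrow> nat" where
  "ddist m x y = (LEAST n. \<exists>p. dwalk m p \<and> hd p = x \<and> last p = y \<and> length p = Suc n)"

definition generation :: "nat \<Rightarrow> nat \<Rightarrow> dvert \<Rightarrow> bool" where
  "generation m r x \<longleftrightarrow> 1 \<le> r \<and> r \<le> m \<and>
     x \<in> dverts (m - r + 1) \<and> x \<notin> dverts (m - r)"

definition subdiamond_set :: "nat \<Rightarrow> nat list \<Rightarrow> dvert set" where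
  "subdiamond_set m w = {x. \<exists>w' a b. (w', a, b) \<in> dedges m \<and> (\<exists>z. w' = w @ z) \<and> (x = a \<or> x = b)}"

definition is_subdiamond :: "nat \<Rightarrow> dvert set \<Rightarrow> nat \<Rightarrow> bool" where
  "is_subdiamond m S h \<longleftrightarrow> (\<exists>j w u v. j \<le> m \<and> (w, u, v) \<in> dedges j \<and>
      S = subdiamond_set m w \<and> h = 2 ^ (m - j))"

end

theory Submission
  imports Defs
begin

lemma dedges_SucE:
  assumes "(w', a, b) \<in> dedges (Suc n)"
  shows "\<exists>w u v. (w,u,v) \<in> dedges n \<and> ((w'=w@[0] \<and> a=u \<and> b=New w False) \<or>
     (w'=w@[1] \<and> a=New w False \<and> b=v) \<or> (w'=w@[2] \<and> a = u \<and> b = New w True) \<or>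
     (w'=w@[3] \<and> a=New w True \<and> b = v))"
  using assms by auto

lemma dedges_SucI:
  assumes "(w,u,v) \<in> dedges n"
  shows "(w@[0], u, New w False) \<in> dedges (Suc n)" "(w@[1], New w False, v) \<in> dedges (Suc n)"
    "(w@[2], u, New w True) \<in> dedges (Suc n)" "(w@[3], New w True, v) \<in> dedges (Suc n)"
  using assms by (auto intro!: bexI[of _ "(w,u,v)"])

lemma dedges_len: "(w,a,b) \<in> dedges n \<Longrightarrow> length w = n"
proof (induction n arbitrary: w a b)
  case 0 then show ?case by simp
next
  case (Suc n) then show ?case by (auto dest!: dedges_SucE)
qed

lemma dedges_uniq: "(w,a,b) \<in> dedges n \<Longrightarrow> (w,a',b') \<in> dedges n \<Longrightarrow> a = a' \<and> b = b'"
proof (induction n arbitrary: w a b a' b')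
  case 0 then show ?case by simp
next
  case (Suc n)
  from dedges_SucE[OF Suc.prems(1)] obtain w1 u1 v1 where
    e1: "(w1,u1,v1) \<in> dedges n" and c1: "(w=w1@[0] \<and> a=u1 \<and> b=New w1 False) \<or>
     (w=w1@[1] \<and> a=New w1 False \<and> b=v1) \<or> (w=w1@[2] \<and> a = u1 \<and> b = New w1 True) \<or>
     (w=w1@[3] \<and> a=New w1 True \<and> b = v1)" by blast
  from dedges_SucE[OF Suc.prems(2)] obtain w2 u2 v2 where
    e2: "(w2,u2,v2) \<in> dedges n" and c2: "(w=w2@[0] \<and> a'=u2 \<and> b'=New w2 False) \<or>
     (w=w2@[1] \<and> a'=New w2 False \<and> b'=v2) \<or> (w=w2@[2] \<and> a' = u2 \<and> b' = New w2 True) \<or>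
     (w=w2@[3] \<and> a'=New w2 True \<and> b' = v2)" by blast
  have "w1 = w2" using c1 c2 by auto
  then have "u1 = u2 \<and> v1 = v2" using Suc.IH[OF e1] e2 by blast
  then show ?case using c1 c2 \<open>w1 = w2\<close> by auto
qed

definition Anc :: "nat list \<Rightarrow> dvert set" where
  "Anc w = {Top, Bot} \<union> {New p s | p s. \<exists>z. z \<noteq> [] \<and> w = p @ z}"

lemma dedges_ends: "(w,a,b) \<in> dedges n \<Longrightarrow> a \<in> Anc w \<and> b \<in> Anc w"
proof (induction n arbitrary: w a b)
  case 0 then show ?case by (simp add: Anc_def)
next
  case (Suc n)
  from dedges_SucE[OF Suc.prems(1)] obtain w1 u1 v1 where
    e1: "(w1,u1,v1) \<in> dedges n" and c1: "(w=w1@[0] \<and> a=u1 \<and> b=New w1 False) \<or>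
     (w=w1@[1] \<and> a=New w1 False \<and> b=v1) \<or> (w=w1@[2] \<and> a = u1 \<and> b = New w1 True) \<or>
     (w=w1@[3] \<and> a=New w1 True \<and> b = v1)" by blast
  have mono: "\<And>x c. x \<in> Anc w1 \<Longrightarrow> x \<in> Anc (w1 @ [c])"
    unfolding Anc_def by auto
  have new: "\<And>s c. New w1 s \<in> Anc (w1 @ [c])" unfolding Anc_def by auto
  from Suc.IH[OF e1] c1 show ?case using mono new by auto
qed

lemma dedges_sub:
  assumes "(w,u,v) \<in> dedges j"
  shows "(w @ z, a, b) \<in> dedges n \<Longrightarrow>
     (a \<in> {u,v} \<or> (\<exists>q s. a = New (w@q) s)) \<and> (b \<in> {u,v} \<or> (\<exists>q s. b = New (w@q) s))"
proof (induction z arbitrary: n a b rule: rev_induct)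
  case Nil
  have "n = j" using dedges_len[OF Nil.prems] dedges_len[OF assms] by simp
  then show ?case using dedges_uniq[OF assms] Nil.prems by auto
next
  case (snoc c z)
  obtain n' where n: "n = Suc n'" using dedges_len[OF snoc.prems]
    by (cases n) auto
  from dedges_SucE[OF snoc.prems[unfolded n]] obtain w1 u1 v1 where
    e1: "(w1,u1,v1) \<in> dedges n'" and c1: "(w@z@[c]=w1@[0] \<and> a=u1 \<and> b=New w1 False) \<or>
     (w@z@[c]=w1@[1] \<and> a=New w1 False \<and> b=v1) \<or> (w@z@[c]=w1@[2] \<and> a = u1 \<and> b = New w1 True) \<or>
     (w@z@[c]=w1@[3] \<and> a=New w1 True \<and> b = v1)" by (auto simp del: dedges.simps)
  have "w1 = w @ z" using c1 by auto
  then have e1': "(w@z,u1,v1) \<in> dedges n'" using e1 by simp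
  from snoc.IH[OF e1'] c1 \<open>w1 = w @ z\<close> show ?case by auto
qed

lemma sep:
  assumes e: "(w,u,v) \<in> dedges j"
    and x: "x \<in> subdiamond_set m w"
    and e': "(w',a,b) \<in> dedges m" and xab: "x = a \<or> x = b"
    and ne: "\<not> (\<exists>z. w' = w @ z)"
  shows "x = u \<or> x = v"
proof -
  from x obtain z a1 b1 where "(w@z,a1,b1) \<in> dedges m" "x = a1 \<or> x = b1"
    unfolding subdiamond_set_def by blast
  then have "x \<in> {u,v} \<or> (\<exists>q s. x = New (w@q) s)" using dedges_sub[OF e] by blast
  moreover have "x \<in> Anc w'" using dedges_ends[OF e'] xab by blast
  moreover
  { fix q s assume "x = New (w@q) s" "x \<in> Anc w'"
    then obtain z' where "w' = (w@q) @ z'" unfolding Anc_def by auto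
    then have False using ne by auto }
  ultimately show ?thesis by blast
qed


fun lo :: "nat \<Rightarrow> nat list \<Rightarrow> nat" where
  "lo k [] = 0"
| "lo k (c # w) = (if odd c then 2 ^ (k - 1) else 0) + lo (k - 1) w"

lemma lo_snoc: "lo k (w @ [c]) = lo k w + (if odd c then 2 ^ (k - length w - 1) else 0)"
  by (induction w arbitrary: k) (auto simp: diff_diff_add)

fun H :: "nat \<Rightarrow> dvert \<Rightarrow> nat" where
  "H m Bot = 0" | "H m Top = 2 ^ m" | "H m (New w s) = lo m w + 2 ^ (m - length w - 1)"

lemma H_edge: "(w,a,b) \<in> dedges n \<Longrightarrow> n \<le> m \<Longrightarrow> H m a = lo m w \<and> H m b = lo m w + 2 ^ (m - n)"
proof (induction n arbitrary: w a b)
  case 0 then show ?case by simp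
next
  case (Suc n)
  from dedges_SucE[OF Suc.prems(1)] obtain w1 u1 v1 where
    e1: "(w1,u1,v1) \<in> dedges n" and c1: "(w=w1@[0] \<and> a=u1 \<and> b=New w1 False) \<or>
     (w=w1@[1] \<and> a=New w1 False \<and> b=v1) \<or> (w=w1@[2] \<and> a = u1 \<and> b = New w1 True) \<or>
     (w=w1@[3] \<and> a=New w1 True \<and> b = v1)" by blast
  have IH: "H m u1 = lo m w1 \<and> H m v1 = lo m w1 + 2 ^ (m - n)" using Suc.IH[OF e1] Suc.prems by simp
  have len: "length w1 = n" using dedges_len[OF e1] .
  have md: "m - n = Suc (m - Suc n)" using Suc.prems by simp
  have p: "(2::nat) ^ (m - n) = 2 ^ (m - Suc n) + 2 ^ (m - Suc n)" unfolding md by simp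
  show ?case using c1 IH len p by (auto simp: lo_snoc)
qed

abbreviation R where "R m \<equiv> (dadj m)\<^sup>*\<^sup>*"

lemma conn1: "(w,a,b) \<in> dedges n \<Longrightarrow> n + d = m \<Longrightarrow> R m a b"
proof (induction d arbitrary: n w a b)
  case 0 then show ?case unfolding dadj_def by auto
next
  case (Suc d)
  have "R m a (New w False)" using Suc.IH[OF dedges_SucI(1)[OF Suc.prems(1)]] Suc.prems by simp
  moreover have "R m (New w False) b" using Suc.IH[OF dedges_SucI(2)[OF Suc.prems(1)]] Suc.prems by simp
  ultimately show ?case by auto
qed

lemma conn2: "(w,a,b) \<in> dedges n \<Longrightarrow> n \<le> m \<Longrightarrow> R m Bot a \<and> R m Bot b"
proof (induction n arbitrary: w a b)
  case 0
  have "R m Bot Top" using conn1[of "[]" Bot Top 0 "m"] by simp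
  then show ?case using 0 by auto
next
  case (Suc n)
  from dedges_SucE[OF Suc.prems(1)] obtain w1 u1 v1 where
    e1: "(w1,u1,v1) \<in> dedges n" and c1: "(w=w1@[0] \<and> a=u1 \<and> b=New w1 False) \<or>
     (w=w1@[1] \<and> a=New w1 False \<and> b=v1) \<or> (w=w1@[2] \<and> a = u1 \<and> b = New w1 True) \<or>
     (w=w1@[3] \<and> a=New w1 True \<and> b = v1)" by blast
  have IH: "R m Bot u1 \<and> R m Bot v1" using Suc.IH[OF e1] Suc.prems by simp
  have "R m u1 (New w1 False)" using conn1[OF dedges_SucI(1)[OF e1], of "m - Suc n"] Suc.prems by simp
  moreover have "R m u1 (New w1 True)" using conn1[OF dedges_SucI(3)[OF e1], of "m - Suc n"] Suc.prems by simp
  ultimately show ?case using IH c1 by (meson rtranclp_trans)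
qed

lemma dadj_sym: "dadj m a b \<Longrightarrow> dadj m b a" unfolding dadj_def by blast

lemma R_sym: "R m a b \<Longrightarrow> R m b a"
proof (induction rule: rtranclp_induct)
  case base then show ?case by simp
next
  case (step y z) then show ?case by (meson dadj_sym converse_rtranclp_into_rtranclp)
qed

lemma dadj_verts: "dadj m a b \<Longrightarrow> a \<in> dverts m \<and> b \<in> dverts m"
  unfolding dadj_def dverts_def by blast

lemma R_walk: "R m x y \<Longrightarrow> x \<in> dverts m \<Longrightarrow> \<exists>p. dwalk m p \<and> hd p = x \<and> last p = y"
proof (induction rule: converse_rtranclp_induct)
  case base then show ?case by (intro exI[of _ "[y]"]) (auto simp: dwalk_def)
next
  case (step x z)
  then obtain p where p: "dwalk m p" "hd p = z" "last p = y" using dadj_verts by blast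
  have "dwalk m (x # p)" unfolding dwalk_def
  proof (intro conjI allI impI)
    show "set (x # p) \<subseteq> dverts m" using p step.prems unfolding dwalk_def by auto
  next
    fix i assume i: "Suc i < length (x # p)"
    show "dadj m ((x # p) ! i) ((x # p) ! Suc i)"
    proof (cases i)
      case 0 then show ?thesis using p step.hyps(1) unfolding dwalk_def by (simp add: hd_conv_nth)
    next
      case (Suc k) then show ?thesis using p i unfolding dwalk_def by auto
    qed
  qed simp
  then show ?case using p unfolding dwalk_def by (intro exI[of _ "x # p"]) auto
qed

lemma lip_walk:
  fixes g :: "dvert \<Rightarrow> int"
  assumes "dwalk m p" and L: "\<And>a b. dadj m a b \<Longrightarrow> \<bar>g a - g b\<bar> \<le> 1"
  shows "i < length p \<Longrightarrow> \<bar>g (p ! 0) - g (p ! i)\<bar> \<le> int i"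
proof (induction i)
  case 0 then show ?case by simp
next
  case (Suc i)
  have "dadj m (p ! i) (p ! Suc i)" using assms(1) Suc.prems unfolding dwalk_def by auto
  then have "\<bar>g (p ! i) - g (p ! Suc i)\<bar> \<le> 1" by (rule L)
  then show ?case using Suc by auto
qed


lemma desc: "(w,a,b) \<in> dedges n \<Longrightarrow> n \<le> k \<Longrightarrow> \<exists>z a'. (w@z, a', b) \<in> dedges k"
proof (induction k)
  case 0 then show ?case by (intro exI[of _ "[]"]) auto
next
  case (Suc k)
  show ?case
  proof (cases "n = Suc k")
    case True then show ?thesis using Suc.prems by (intro exI[of _ "[]"]) auto
  next
    case False
    then obtain z a' where "(w@z, a', b) \<in> dedges k" using Suc by auto
    from dedges_SucI(2)[OF this] show ?thesis by (intro exI[of _ "z@[1]"]) auto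
  qed
qed

theorem mainTheorem9:
  fixes m r :: nat and v :: dvert
  assumes "1 \<le> r" and "r \<le> m" and "v \<in> dverts m" and "generation m r v"
  shows "\<exists>S. is_subdiamond m S (2 ^ r) \<and>
           {x \<in> dverts m. ddist m x v \<le> 2 ^ (r - 1)} \<subseteq> S"
proof -
  define j where "j = m - r"
  have jm: "m - r + 1 = Suc j" using j_def by simp
  have v1: "v \<in> dverts (Suc j)" and v0: "v \<notin> dverts j" using assms(4) unfolding generation_def jm j_def by auto
  from v1 obtain w' a b where "(w',a,b) \<in> dedges (Suc j)" "v = a \<or> v = b" unfolding dverts_def by blast
  from dedges_SucE[OF this(1)] this(2) obtain w u t s where
    e: "(w,u,t) \<in> dedges j" and vv: "v = u \<or> v = t \<or> v = New w s" by blast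
  have "u \<in> dverts j" "t \<in> dverts j" using e unfolding dverts_def by blast+
  then have vdef: "v = New w s" using vv v0 by auto
  define S where "S = subdiamond_set m w"
  have jle: "j \<le> m" "Suc j \<le> m" using j_def assms by auto
  have isS: "is_subdiamond m S (2 ^ r)" unfolding is_subdiamond_def S_def
    using e jle j_def assms by (intro exI[of _ j] exI[of _ w] exI[of _ u] exI[of _ t]) auto
  have vedge: "(w @ [if s then 2 else 0], u, v) \<in> dedges (Suc j)"
    using dedges_SucI(1,3)[OF e] vdef by (cases s) auto
  obtain z a' where "(w @ [if s then 2 else 0] @ z, a', v) \<in> dedges m"
    using desc[OF vedge jle(2)] by auto
  then have vS: "v \<in> S" unfolding S_def subdiamond_set_def by blast
  have lenw: "length w = j" using dedges_len[OF e] .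
  have Hu: "H m u = lo m w" and Ht: "H m t = lo m w + 2 ^ r" using H_edge[OF e jle(1)] j_def assms by auto
  have Hv: "H m v = lo m w + 2 ^ (r - 1)" using vdef lenw j_def assms by simp
  have pw: "(2::nat) ^ r = 2 ^ (r - 1) + 2 ^ (r - 1)"
    using assms(1) by (cases r) simp_all
  define g :: "dvert \<Rightarrow> int" where
    "g x = (if x \<in> S then 2 ^ (r - 1) - \<bar>int (H m x) - int (H m v)\<bar> else -1)" for x
  have gut: "x = u \<or> x = t \<Longrightarrow> x \<in> S \<Longrightarrow> g x = 0" for x
  proof -
    have d1: "int (H m u) - int (H m v) = - (2^(r-1))" using Hu Hv by simp
    have d2: "int (H m t) - int (H m v) = 2^(r-1)" using Ht Hv pw by simp
    assume "x = u \<or> x = t" "x \<in> S"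
    then show "g x = 0" using d1 d2 unfolding g_def by auto
  qed
  have L1: "\<bar>g a - g b\<bar> \<le> 1" if ed: "(w2,a,b) \<in> dedges m" for w2 a b
  proof (cases "a \<in> S \<and> b \<in> S")
    case True
    have "H m b = H m a + 1" using H_edge[OF ed] by simp
    then show ?thesis using True unfolding g_def by auto
  next
    case False
    then have ne: "\<not> (\<exists>z. w2 = w @ z)" using ed unfolding S_def subdiamond_set_def by blast
    have "a \<in> S \<Longrightarrow> a = u \<or> a = t" using sep[OF e _ ed _ ne] S_def by blast
    moreover have "b \<in> S \<Longrightarrow> b = u \<or> b = t" using sep[OF e _ ed _ ne] S_def by blast
    ultimately show ?thesis using gut unfolding g_def by (smt (verit))
  qed
  have L: "\<bar>g a - g b\<bar> \<le> 1" if "dadj m a b" for a b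
    using that L1 unfolding dadj_def by (metis abs_minus_commute)
  have "x \<in> S" if x: "x \<in> dverts m" and d: "ddist m x v \<le> 2 ^ (r - 1)" for x
  proof (rule ccontr)
    assume xS: "x \<notin> S"
    from x obtain w3 a3 b3 where "(w3,a3,b3) \<in> dedges m" "x = a3 \<or> x = b3" unfolding dverts_def by blast
    then have "R m Bot x" using conn2 by blast
    moreover from assms(3) obtain w4 a4 b4 where "(w4,a4,b4) \<in> dedges m" "v = a4 \<or> v = b4" unfolding dverts_def by blast
    then have "R m Bot v" using conn2 by blast
    ultimately have "R m x v" using R_sym by (meson rtranclp_trans)
    then obtain p where "dwalk m p \<and> hd p = x \<and> last p = v" using R_walk x by blast
    then have ex: "\<exists>n p. dwalk m p \<and> hd p = x \<and> last p = v \<and> length p = Suc n"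
      unfolding dwalk_def by (intro exI[of _ "length p - 1"] exI[of _ p]) auto
    obtain q where q: "dwalk m q" "hd q = x" "last q = v" "length q = Suc (ddist m x v)"
      using LeastI_ex[OF ex] unfolding ddist_def by blast
    have qne: "q \<noteq> []" using q(1) unfolding dwalk_def by simp
    have "\<bar>g (q ! 0) - g (q ! (length q - 1))\<bar> \<le> int (length q - 1)"
      using lip_walk[where g=g, OF q(1) L, of "length q - 1"] qne by simp
    moreover have "q ! 0 = x" using q(2) qne by (simp add: hd_conv_nth)
    moreover have "q ! (length q - 1) = v" using q(3) qne by (simp add: last_conv_nth)
    moreover have "g x = -1" using xS unfolding g_def by simp
    moreover have "g v = 2 ^ (r - 1)" using vS unfolding g_def by simp
    ultimately have "2 ^ (r - 1) + 1 \<le> int (ddist m x v)" using q(4) by simp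
    moreover have "int (ddist m x v) \<le> 2 ^ (r - 1)" using d by (metis of_nat_le_iff of_nat_numeral of_nat_power)
    ultimately show False by linarith
  qed
  then show ?thesis using isS by blast
qed

end
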